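(* For every $n\ge 10$ there exist two graphs $G_n,H_n$, each on $2n$ vertices, and a graph $F$ such that, with $\mathcal{F}=\{F\}$, for every number of rounds $T>0$, $$\big\|\overline{\phi^{(T)}_{\mathsf{WL},\mathcal{F}}}(G_n)-\overline{\phi^{(T)}_{\mathsf{WL},\mathcal{F}}}(H_n)\big\|<\big\|\overline{\phi^{(T)}_{\mathsf{WL}}}(G_n)-\overline{\phi^{(T)}_{\mathsf{WL}}}(H_n)\big\|.$$
   Context: Graphs are finite, simple, undirected, unlabeled. $1$-WL: $C^1_0$ constant, $C^1_t(v)=\mathsf{RELABEL}(C^1_{t-1}(v),\{\!\{C^1_{t-1}(u):u\in N(v)\}\!\})$ with a fixed injective $\mathsf{RELABEL}$ shared by all graphs. $1$-WL$_{\mathcal{F}}$: same update with initial colour $(\ell_F(v))_{F\in\mathcal{F}}$, $\ell_F(v)=1$ if $v$ lies in some vertex set $X$ with induced subgraph $G[X]$ isomorphic to $F$, else $0$. $\phi_t(G)$ (resp. $\phi_{\mathcal{F},t}(G)$) counts the vertices of $G$ of each colour occurring at round $t$ in the graphs considered; $\phi^{(T)}_{\mathsf{WL}}(G)$, $\phi^{(T)}_{\mathsf{WL},\mathcal{F}}(G)$ are concatenations over rounds $0,\dots,T$; the bar denotes normalisation to unit Euclidean norm; $\|\cdot\|$ is the Euclidean norm. *)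

theory Defs
  imports Complex_Main "HOL-Library.Multiset"
begin

type_synonym graph = "nat set \<times> (nat \<Rightarrow> nat \<Rightarrow> bool)"

definition verts :: "graph \<Rightarrow> nat set" where "verts G = fst G"
definition adj :: "graph \<Rightarrow> nat \<Rightarrow> nat \<Rightarrow> bool" where "adj G = snd G"

definition simple_graph :: "graph \<Rightarrow> bool" where
  "simple_graph G \<longleftrightarrow> finite (verts G)
     \<and> (\<forall>u v. adj G u v \<longrightarrow> u \<in> verts G \<and> v \<in> verts G)
     \<and> (\<forall>u v. adj G u v \<longleftrightarrow> adj G v u)
     \<and> (\<forall>v. \<not> adj G v v)"

definition nbrs :: "graph \<Rightarrow> nat \<Rightarrow> nat set" where
  "nbrs G v = {u \<in> verts G. adj G v u}"

definition induced_iso :: "graph \<Rightarrow> nat set \<Rightarrow> graph \<Rightarrow> bool" where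
  "induced_iso G X F \<longleftrightarrow> (\<exists>f. bij_betw f X (verts F)
      \<and> (\<forall>u\<in>X. \<forall>w\<in>X. adj G u w \<longleftrightarrow> adj F (f u) (f w)))"

definition ell :: "graph \<Rightarrow> graph \<Rightarrow> nat \<Rightarrow> bool" where
  "ell F G v \<longleftrightarrow> (\<exists>X. X \<subseteq> verts G \<and> v \<in> X \<and> induced_iso G X F)"

text \<open>Colours: the injective RELABEL is realised structurally: a colour at round
t+1 is literally the pair (old colour, multiset of neighbour colours).\<close>
datatype 'b col = Init 'b | Ref "'b col" "'b col multiset"

primrec wl :: "(graph \<Rightarrow> nat \<Rightarrow> 'b) \<Rightarrow> graph \<Rightarrow> nat \<Rightarrow> nat \<Rightarrow> 'b col" where
  "wl init G 0 v = Init (init G v)"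
| "wl init G (Suc t) v =
     Ref (wl init G t v) (image_mset (wl init G t) (mset_set (nbrs G v)))"

definition init_plain :: "graph \<Rightarrow> nat \<Rightarrow> bool list" where
  "init_plain G v = []"

definition init_F :: "graph list \<Rightarrow> graph \<Rightarrow> nat \<Rightarrow> bool list" where
  "init_F Fs G v = map (\<lambda>F. ell F G v) Fs"

definition cnt :: "(graph \<Rightarrow> nat \<Rightarrow> 'b) \<Rightarrow> graph \<Rightarrow> nat \<Rightarrow> 'b col \<Rightarrow> nat" where
  "cnt init G t c = card {v \<in> verts G. wl init G t v = c}"

definition colours :: "(graph \<Rightarrow> nat \<Rightarrow> 'b) \<Rightarrow> graph \<Rightarrow> graph \<Rightarrow> nat \<Rightarrow> 'b col set" where
  "colours init G H t = wl init G t ` verts G \<union> wl init H t ` verts H"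

text \<open>Euclidean norm of the concatenated feature vector phi^(T)(K) (K \<in> {G,H}),
indexed by pairs (t,c) with t \<le> T and c a colour occurring at round t.\<close>
definition phi_norm :: "(graph \<Rightarrow> nat \<Rightarrow> 'b) \<Rightarrow> graph \<Rightarrow> graph \<Rightarrow> nat \<Rightarrow> graph \<Rightarrow> real" where
  "phi_norm init G H T K =
     sqrt (\<Sum>t\<in>{..T}. \<Sum>c\<in>colours init G H t. (real (cnt init K t c))\<^sup>2)"

definition wl_dist :: "(graph \<Rightarrow> nat \<Rightarrow> 'b) \<Rightarrow> graph \<Rightarrow> graph \<Rightarrow> nat \<Rightarrow> real" where
  "wl_dist init G H T =
     sqrt (\<Sum>t\<in>{..T}. \<Sum>c\<in>colours init G H t.
        (real (cnt init G t c) / phi_norm init G H T G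
         - real (cnt init H t c) / phi_norm init G H T H)\<^sup>2)"

end

theory Submission
  imports Defs
begin


definition adjH :: "nat \<Rightarrow> nat \<Rightarrow> bool" where
  "adjH u v \<longleftrightarrow> (u=0 \<and> (v=1 \<or> v=2)) \<or> (v=0 \<and> (u=1 \<or> u=2)) \<or> (u=3 \<and> v=4) \<or> (u=4 \<and> v=3)"
definition adjF :: "nat \<Rightarrow> nat \<Rightarrow> bool" where
  "adjF u v \<longleftrightarrow> (u=0 \<and> (v=1 \<or> v=2)) \<or> (v=0 \<and> (u=1 \<or> u=2))"
definition Gg :: "nat \<Rightarrow> graph" where "Gg n = ({..<2*n}, \<lambda>u v. False)"
definition Hg :: "nat \<Rightarrow> graph" where "Hg n = ({..<2*n}, adjH)"
definition Fg :: graph where "Fg = ({0,1,2}, adjF)"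

lemma sg_G: "simple_graph (Gg n)"
  by (simp add: simple_graph_def Gg_def verts_def adj_def)
lemma sg_H: "n \<ge> 3 \<Longrightarrow> simple_graph (Hg n)"
  by (auto simp add: simple_graph_def Hg_def verts_def adj_def adjH_def)
lemma sg_F: "simple_graph Fg"
  by (auto simp add: simple_graph_def Fg_def verts_def adj_def adjF_def)

lemma ell_G: "\<not> ell Fg (Gg n) v"
proof
  assume "ell Fg (Gg n) v"
  then obtain X f where bij: "bij_betw f X {0,1,2}" and
    ad: "\<forall>u\<in>X. \<forall>w\<in>X. adj (Gg n) u w \<longleftrightarrow> adj Fg (f u) (f w)"
    by (auto simp: ell_def induced_iso_def Fg_def verts_def)
  have h: "0 \<in> f ` X" "1 \<in> f ` X" using bij by (simp_all add: bij_betw_def)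
  obtain z where "z \<in> X" "f z = 0" using h(1) by (metis imageE)
  moreover obtain p where "p \<in> X" "f p = 1" using h(2) by (metis imageE)
  ultimately have "adj (Gg n) z p = adj Fg (f z) (f p)" using ad by blast
  then show False using \<open>f z = 0\<close> \<open>f p = 1\<close> by (simp add: Gg_def Fg_def adj_def adjF_def)
qed

lemma ell_H: assumes n3: "n \<ge> 3" shows "ell Fg (Hg n) v \<longleftrightarrow> v \<in> {0,1,2}"
proof
  assume "ell Fg (Hg n) v"
  then obtain X f where X: "X \<subseteq> {..<2*n}" "v \<in> X" and bij: "bij_betw f X {0,1,2}" and
    ad: "\<forall>u\<in>X. \<forall>w\<in>X. adjH u w \<longleftrightarrow> adjF (f u) (f w)"
    by (auto simp: ell_def induced_iso_def Fg_def Hg_def verts_def adj_def)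
  have h: "0 \<in> f ` X" "1 \<in> f ` X" "2 \<in> f ` X" using bij by (simp_all add: bij_betw_def)
  obtain z where z: "z \<in> X" "f z = 0" using h(1) by (metis imageE)
  obtain p where p: "p \<in> X" "f p = 1" using h(2) by (metis imageE)
  obtain q where q: "q \<in> X" "f q = 2" using h(3) by (metis imageE)
  have zpq: "z \<in> X" "p \<in> X" "q \<in> X" "f z = 0" "f p = 1" "f q = 2" using z p q by simp_all
  then have "adjH z p = adjF (f z) (f p)" "adjH z q = adjF (f z) (f q)" using ad by blast+
  then have adj2: "adjH z p" "adjH z q" using zpq by (simp_all add: adjF_def)
  have "p \<noteq> q" using zpq by auto
  then have "z = 0" "p \<in> {1,2}" "q \<in> {1,2}" using adj2 by (auto simp: adjH_def)
  then have sub: "{0,1,2} \<subseteq> X" using zpq \<open>p \<noteq> q\<close> by auto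
  have cX: "card X = 3" using bij_betw_same_card[OF bij] by simp
  have fin: "finite X" using X(1) finite_subset by blast
  have "{0,1,2} = X" using card_subset_eq[OF fin sub] cX by simp
  then show "v \<in> {0,1,2}" using X by simp
next
  assume a0: "v \<in> {0,1,2}"
  have b: "bij_betw id {0,1,2::nat} {0,1,2}" by simp
  have ad: "\<forall>u\<in>{0,1,2::nat}. \<forall>w\<in>{0,1,2}. adjH u w \<longleftrightarrow> adjF (id u) (id w)"
    by (simp add: adjH_def adjF_def)
  have X: "{0,1,2} \<subseteq> verts (Hg n)" using n3 by (auto simp: Hg_def verts_def)
  have "induced_iso (Hg n) {0,1,2} Fg"
    unfolding induced_iso_def Fg_def Hg_def verts_def adj_def fst_conv snd_conv
    using b ad by blast
  then show "ell Fg (Hg n) v" unfolding ell_def using X a0 by blast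
qed


primrec ce :: "'b \<Rightarrow> 'b \<Rightarrow> nat \<Rightarrow> 'b col \<times> 'b col" where
  "ce a b 0 = (Init a, Init b)"
| "ce a b (Suc t) = (Ref (fst (ce a b t)) {#snd (ce a b t), snd (ce a b t)#}, Ref (snd (ce a b t)) {#fst (ce a b t)#})"
primrec kc :: "'b \<Rightarrow> nat \<Rightarrow> 'b col" where
  "kc c 0 = Init c" | "kc c (Suc t) = Ref (kc c t) {#kc c t#}"
primrec ic :: "'b \<Rightarrow> nat \<Rightarrow> 'b col" where
  "ic d 0 = Init d" | "ic d (Suc t) = Ref (ic d t) {#}"

lemma nbrs_G: "nbrs (Gg n) v = {}" by (simp add: nbrs_def Gg_def adj_def)

lemma wl_G: "(\<forall>v. init (Gg n) v = d) \<Longrightarrow> wl init (Gg n) t v = ic d t"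
  by (induction t arbitrary: v) (simp_all add: nbrs_G)

definition colH :: "'b \<Rightarrow> 'b \<Rightarrow> 'b \<Rightarrow> 'b \<Rightarrow> nat \<Rightarrow> nat \<Rightarrow> 'b col" where
  "colH a b c d t v = (if v = 0 then fst (ce a b t) else if v = 1 \<or> v = 2 then snd (ce a b t)
     else if v = 3 \<or> v = 4 then kc c t else ic d t)"

lemma nbrs_H: "n \<ge> 3 \<Longrightarrow> nbrs (Hg n) v = (if v = 0 then {1,2} else if v = 1 \<or> v = 2 then {0}
   else if v = 3 then {4} else if v = 4 then {3} else {})"
  by (auto simp: nbrs_def Hg_def adj_def verts_def adjH_def)

lemma wl_H:
  assumes "n \<ge> 3" "init (Hg n) 0 = a" "init (Hg n) 1 = b" "init (Hg n) 2 = b"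
     "init (Hg n) 3 = c" "init (Hg n) 4 = c" "\<forall>v\<ge>5. init (Hg n) v = d"
  shows "wl init (Hg n) t v = colH a b c d t v"
proof (induction t arbitrary: v)
  case 0
  then show ?case using assms
    by (cases "v \<ge> 5") (auto simp: colH_def numeral_eq_Suc less_Suc_eq le_Suc_eq)
next
  case (Suc t)
  show ?case using assms(1)
    by (simp add: Suc.IH nbrs_H colH_def)
qed


lemma card_split5:
  assumes "N \<ge> 5" "\<forall>v\<ge>5. f v = D"
  shows "card {v\<in>{..<N}. f v = x} =
    (if f 0 = x then 1 else 0) + (if f 1 = x then 1 else 0) + (if f 2 = x then 1 else 0)
    + (if f 3 = x then 1 else 0) + (if f 4 = x then 1 else 0) + (if D = x then N - 5 else 0)"
proof -
  have ivl: "{..<N} = {..<5} \<union> {5..<N}" using assms(1) by auto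
  have "card {v\<in>{..<N}. f v = x} = sum (\<lambda>_. 1::nat) {v\<in>{..<N}. f v = x}" by (rule card_eq_sum)
  also have "\<dots> = (\<Sum>v\<in>{..<N}. if f v = x then 1 else 0)" by (rule sum.inter_filter) simp
  also have "(\<Sum>v\<in>{..<N}. if f v = x then 1 else (0::nat)) = (\<Sum>v\<in>{..<5} \<union> {5..<N}. if f v = x then 1 else 0)" using ivl by simp
  also have "(\<Sum>v\<in>{..<5} \<union> {5..<N}. if f v = x then 1 else 0) =
     (\<Sum>v\<in>{..<5}. if f v = x then 1 else 0) + (\<Sum>v\<in>{5..<N}. if f v = x then 1 else (0::nat))"
    by (rule sum.union_disjoint) auto
  also have "(\<Sum>v\<in>{5..<N}. if f v = x then 1 else (0::nat)) = (\<Sum>v\<in>{5..<N}. if D = x then 1 else 0)"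
    by (rule sum.cong) (use assms(2) in auto)
  also have "(\<Sum>v\<in>{..<5::nat}. if f v = x then 1 else (0::nat)) = (if f 0 = x then 1 else 0) + (if f 1 = x then 1 else 0) + (if f 2 = x then 1 else 0)
    + (if f 3 = x then 1 else 0) + (if f 4 = x then 1 else 0)"
    by (simp add: eval_nat_numeral)
  also have "(\<Sum>v\<in>{5..<N}. if D = x then 1 else (0::nat)) = (if D = x then N - 5 else 0)" by simp
  finally show ?thesis .
qed

lemma cntH:
  assumes "n \<ge> 3" "\<forall>v. wl init (Hg n) t v = colH a b c d t v"
  shows "cnt init (Hg n) t x =
    (if fst (ce a b t) = x then 1 else 0) + (if snd (ce a b t) = x then 2 else 0)
    + (if kc c t = x then 2 else 0) + (if ic d t = x then 2*n - 5 else 0)"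
proof -
  have "cnt init (Hg n) t x = card {v\<in>{..<2*n}. colH a b c d t v = x}"
    using assms(2) by (simp add: cnt_def Hg_def verts_def)
  also have "\<dots> = (if colH a b c d t 0 = x then 1 else 0) + (if colH a b c d t 1 = x then 1 else 0) + (if colH a b c d t 2 = x then 1 else 0)
    + (if colH a b c d t 3 = x then 1 else 0) + (if colH a b c d t 4 = x then 1 else 0) + (if ic d t = x then 2*n - 5 else 0)"
    by (rule card_split5) (use assms(1) in \<open>auto simp: colH_def\<close>)
  finally show ?thesis by (simp add: colH_def)
qed

lemma cntG:
  assumes "\<forall>v. wl init (Gg n) t v = ic d t"
  shows "cnt init (Gg n) t x = (if ic d t = x then 2*n else 0)"
  using assms by (simp add: cnt_def Gg_def verts_def)

lemma coloursGH:
  assumes "n \<ge> 3" "\<forall>v. wl init (Hg n) t v = colH a b c d t v" "\<forall>v. wl init (Gg n) t v = ic d t"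
  shows "colours init (Gg n) (Hg n) t = {fst (ce a b t), snd (ce a b t), kc c t, ic d t}"
proof -
  have "colH a b c d t ` {..<2*n} = {fst (ce a b t), snd (ce a b t), kc c t, ic d t}"
  proof
    show "colH a b c d t ` {..<2*n} \<subseteq> {fst (ce a b t), snd (ce a b t), kc c t, ic d t}"
      by (auto simp: colH_def)
    have m: "0 \<in> {..<2*n}" "1 \<in> {..<2*n}" "3 \<in> {..<2*n}" "5 \<in> {..<2*n}" using assms(1) by auto
    have h: "fst (ce a b t) = colH a b c d t 0" "snd (ce a b t) = colH a b c d t 1"
      "kc c t = colH a b c d t 3" "ic d t = colH a b c d t 5" by (simp_all add: colH_def)
    show "{fst (ce a b t), snd (ce a b t), kc c t, ic d t} \<subseteq> colH a b c d t ` {..<2*n}"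
      using image_eqI[where f="colH a b c d t", OF h(1) m(1)] image_eqI[where f="colH a b c d t", OF h(2) m(2)] image_eqI[where f="colH a b c d t", OF h(3) m(3)] image_eqI[where f="colH a b c d t", OF h(4) m(4)]
      by blast
  qed
  moreover have "0 \<in> {..<2*n}" using assms(1) by simp
  then have "{..<2*n} \<noteq> {}" by blast
  ultimately show ?thesis using assms
    by (auto simp: colours_def Gg_def Hg_def verts_def)
qed

lemma ic_ne: "ic d (Suc t) \<noteq> fst (ce a b (Suc t))" "ic d (Suc t) \<noteq> snd (ce a b (Suc t))"
  "ic d (Suc t) \<noteq> kc c (Suc t)" by simp_all
lemma ce_ne: "fst (ce a b (Suc t)) \<noteq> snd (ce a b (Suc t))" "fst (ce a b (Suc t)) \<noteq> kc c (Suc t)"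
proof -
  show "fst (ce a b (Suc t)) \<noteq> snd (ce a b (Suc t))"
  proof
    assume "fst (ce a b (Suc t)) = snd (ce a b (Suc t))"
    then have "size {#snd (ce a b t), snd (ce a b t)#} = size {#fst (ce a b t)#}" by simp
    then show False by simp
  qed
  show "fst (ce a b (Suc t)) \<noteq> kc c (Suc t)"
  proof
    assume "fst (ce a b (Suc t)) = kc c (Suc t)"
    then have "size {#snd (ce a b t), snd (ce a b t)#} = size {#kc c t#}" by simp
    then show False by simp
  qed
qed
lemma ek_ne2: "snd (ce a b (Suc (Suc t))) \<noteq> kc c (Suc (Suc t))"
  using ce_ne(2)[of a b t c] by simp
lemma ek_ne_F: "b \<noteq> c \<Longrightarrow> snd (ce a b t) \<noteq> kc c t"
  by (induction t) auto


lemma sum4: "C \<noteq> E \<Longrightarrow> C \<noteq> K \<Longrightarrow> C \<noteq> I \<Longrightarrow> E \<noteq> K \<Longrightarrow> E \<noteq> I \<Longrightarrow> K \<noteq> I \<Longrightarrow>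
  (\<Sum>c\<in>{C,E,K,I}. f c) = f C + f E + f K + (f I :: real)"
  by simp

lemma round_gen:
  assumes "n \<ge> 3" "\<forall>v. wl init (Hg n) t v = colH a b c d t v" "\<forall>v. wl init (Gg n) t v = ic d t"
  shows "(\<Sum>x\<in>colours init (Gg n) (Hg n) t. \<phi> (cnt init (Gg n) t x) (cnt init (Hg n) t x))
   = (\<Sum>x\<in>{fst (ce a b t), snd (ce a b t), kc c t, ic d t}. \<phi> (if ic d t = x then 2*n else 0)
       ((if fst (ce a b t) = x then 1 else 0) + (if snd (ce a b t) = x then 2 else 0)
    + (if kc c t = x then 2 else 0) + (if ic d t = x then 2*n - 5 else 0)))"
  unfolding coloursGH[OF assms] by (rule sum.cong[OF refl]) (simp add: cntH[OF assms(1,2)] cntG[OF assms(3)])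

lemma round_distinct:
  assumes "n \<ge> 3" "\<forall>v. wl init (Hg n) t v = colH a b c d t v" "\<forall>v. wl init (Gg n) t v = ic d t"
    and "t = Suc s" "snd (ce a b t) \<noteq> kc c t"
  shows "(\<Sum>x\<in>colours init (Gg n) (Hg n) t. \<phi> (cnt init (Gg n) t x) (cnt init (Hg n) t x))
   = \<phi> 0 1 + \<phi> 0 2 + \<phi> 0 2 + (\<phi> (2*n) (2*n-5) :: real)"
proof -
  have d: "fst (ce a b t) \<noteq> snd (ce a b t)" "fst (ce a b t) \<noteq> kc c t" "fst (ce a b t) \<noteq> ic d t"
     "snd (ce a b t) \<noteq> ic d t" "kc c t \<noteq> ic d t"
    using ce_ne(1)[of a b s] ce_ne(2)[of a b s c] ic_ne(1,2)[of d s a b] ic_ne(3)[of d s c] assms(4) by auto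
  show ?thesis
    unfolding round_gen[OF assms(1-3)]
    by (subst sum4) (use d assms(5) in \<open>simp_all add: numeral_2_eq_2[symmetric]\<close>)
qed

lemma init_plain_H: "n \<ge> 3 \<Longrightarrow> \<forall>v. wl init_plain (Hg n) t v = colH [] [] [] [] t v"
  by (intro allI wl_H) (auto simp: init_plain_def)
lemma init_plain_G: "\<forall>v. wl init_plain (Gg n) t v = ic [] t"
  by (intro allI wl_G) (auto simp: init_plain_def)
lemma init_F_H: "n \<ge> 3 \<Longrightarrow> \<forall>v. wl (init_F [Fg]) (Hg n) t v = colH [True] [True] [False] [False] t v"
  by (intro allI wl_H) (auto simp: init_F_def ell_H)
lemma init_F_G: "\<forall>v. wl (init_F [Fg]) (Gg n) t v = ic [False] t"
  by (intro allI wl_G) (auto simp: init_F_def ell_G)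

lemma plain_round:
  assumes "n \<ge> 3"
  shows "(\<Sum>x\<in>colours init_plain (Gg n) (Hg n) t. \<phi> (cnt init_plain (Gg n) t x) (cnt init_plain (Hg n) t x))
   = (if t = 0 then \<phi> (2*n) (2*n) else if t = 1 then \<phi> 0 1 + \<phi> 0 4 + \<phi> (2*n) (2*n-5)
      else \<phi> 0 1 + \<phi> 0 2 + \<phi> 0 2 + (\<phi> (2*n) (2*n-5) :: real))"
proof (cases t)
  case 0
  have "1 + 2 + 2 + (2*n - 5) = 2*n" using assms by simp
  then show ?thesis using 0
    unfolding round_gen[OF assms init_plain_H[OF assms] init_plain_G] by simp
next
  case (Suc s)
  show ?thesis
  proof (cases s)
    case 0
    show ?thesis using Suc 0
      unfolding round_gen[OF assms init_plain_H[OF assms] init_plain_G] by (simp add: numeral_2_eq_2[symmetric])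
  next
    case (Suc m)
    have ne: "snd (ce [] [] t) \<noteq> kc [] t" using ek_ne2 \<open>t = Suc s\<close> Suc by simp
    have "(\<Sum>x\<in>colours init_plain (Gg n) (Hg n) t. \<phi> (cnt init_plain (Gg n) t x) (cnt init_plain (Hg n) t x))
       = \<phi> 0 1 + \<phi> 0 2 + \<phi> 0 2 + (\<phi> (2*n) (2*n-5) :: real)"
      by (rule round_distinct[OF assms init_plain_H[OF assms] init_plain_G \<open>t = Suc s\<close> ne])
    then show ?thesis using \<open>t = Suc s\<close> Suc by simp
  qed
qed

lemma F_round:
  assumes "n \<ge> 3"
  shows "(\<Sum>x\<in>colours (init_F [Fg]) (Gg n) (Hg n) t. \<phi> (cnt (init_F [Fg]) (Gg n) t x) (cnt (init_F [Fg]) (Hg n) t x))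
   = (if t = 0 then \<phi> 0 3 + \<phi> (2*n) (2*n-3)
      else \<phi> 0 1 + \<phi> 0 2 + \<phi> 0 2 + (\<phi> (2*n) (2*n-5) :: real))"
proof (cases t)
  case 0
  have e: "2 + (2*n - 5) = 2*n-3" "Suc (Suc (2*n - 5)) = 2*n-3" using assms by simp_all
  show ?thesis using 0
    unfolding round_gen[OF assms init_F_H[OF assms] init_F_G] by (simp add: e numeral_2_eq_2[symmetric])
next
  case (Suc s)
  have ne: "snd (ce [True] [True] t) \<noteq> kc [False] t" by (rule ek_ne_F) simp
  have "(\<Sum>x\<in>colours (init_F [Fg]) (Gg n) (Hg n) t. \<phi> (cnt (init_F [Fg]) (Gg n) t x) (cnt (init_F [Fg]) (Hg n) t x))
       = \<phi> 0 1 + \<phi> 0 2 + \<phi> 0 2 + (\<phi> (2*n) (2*n-5) :: real)"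
    by (rule round_distinct[OF assms init_F_H[OF assms] init_F_G Suc ne])
  then show ?thesis using Suc by simp
qed

lemma sum_rounds:
  fixes r :: "nat \<Rightarrow> real"
  assumes "T \<ge> 1" "\<forall>t\<ge>2. r t = g"
  shows "(\<Sum>t\<in>{..T}. r t) = r 0 + r 1 + (real T - 1) * g"
proof -
  obtain m where T: "T = Suc m" using assms(1) by (cases T) auto
  have "(\<Sum>t\<in>{..Suc m}. r t) = r 0 + r 1 + real m * g"
    by (induction m) (use assms(2) in \<open>simp_all add: algebra_simps\<close>)
  then show ?thesis using T by simp
qed

lemma sum_rounds_if:
  fixes A B C :: real
  assumes "T \<ge> 1"
  shows "(\<Sum>t\<in>{..T}. if t = 0 then A else if t = 1 then B else C) = A + B + (real T - 1) * C"
  using sum_rounds[OF assms, where r = "\<lambda>t. if t = 0 then A else if t = 1 then B else C" and g = C] by simp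

lemma sum_rounds_if1:
  fixes A C :: real
  assumes "T \<ge> 1"
  shows "(\<Sum>t\<in>{..T}. if t = 0 then A else C) = A + real T * C"
  using sum_rounds[OF assms, where r = "\<lambda>t. if t = 0 then A else C" and g = C] by (simp add: algebra_simps)

lemma dist_alg:
  fixes g h :: "nat \<Rightarrow> 'c \<Rightarrow> real"
  shows "(\<Sum>t\<in>A. \<Sum>c\<in>B t. (g t c / p - h t c / q)\<^sup>2)
     = (\<Sum>t\<in>A. \<Sum>c\<in>B t. (g t c)\<^sup>2) / p\<^sup>2 + (\<Sum>t\<in>A. \<Sum>c\<in>B t. (h t c)\<^sup>2) / q\<^sup>2
       - 2 * (\<Sum>t\<in>A. \<Sum>c\<in>B t. g t c * h t c) / (p * q)"
proof -
  have "\<And>x y. (x / p - y / q)\<^sup>2 = x\<^sup>2 / p\<^sup>2 + y\<^sup>2 / q\<^sup>2 - 2 * (x * y) / (p * q)"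
    by (simp add: power2_diff power_divide)
  then show ?thesis
    by (simp add: sum_divide_distrib sum_distrib_left sum.distrib sum_subtractf)
qed

lemma cmp:
  fixes IPP IPF S A B :: real
  assumes "S > 0" "A > 0" "B > 0" "IPP \<ge> 0" "IPF \<ge> 0" "IPP^2 * B < IPF^2 * A"
  shows "sqrt (S / (sqrt S)\<^sup>2 + B / (sqrt B)\<^sup>2 - 2 * IPF / (sqrt S * sqrt B))
       < sqrt (S / (sqrt S)\<^sup>2 + A / (sqrt A)\<^sup>2 - 2 * IPP / (sqrt S * sqrt A))"
proof -
  have "sqrt (IPP^2 * B) < sqrt (IPF^2 * A)" using assms(6) by simp
  then have 1: "IPP * sqrt B < IPF * sqrt A" using assms(4,5) by (simp add: real_sqrt_mult)
  have "IPP / (sqrt S * sqrt A) < IPF / (sqrt S * sqrt B)"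
    using 1 assms(1-3) by (simp add: divide_simps)
  then show ?thesis using assms(1-3) by simp
qed
lemma poly_ineq:
  fixes N T :: real
  assumes "N \<ge> 20" "T \<ge> 1"
  shows "(N + T*(N-5))^2 * ((N-3)^2 + 9 + T*((N-5)^2 + 9))
       < (N - 3 + T*(N-5))^2 * (N^2 + T*(N-5)^2 + 9*T + 8)"
proof -
  define x where "x = N - 20"
  define y where "y = T - 1"
  have x: "x \<ge> 0" and y: "y \<ge> 0" using assms by (auto simp: x_def y_def)
  have N: "N = 20 + x" and T: "T = 1 + y" by (auto simp: x_def y_def)
  have e: "(N - 3 + T*(N-5))^2 * (N^2 + T*(N-5)^2 + 9*T + 8) - (N + T*(N-5))^2 * ((N-3)^2 + 9 + T*((N-5)^2 + 9))
    = 5708 + 10686*y + 3690*y^2 + 976*x + 1610*x*y + 546*x*y^2 + 38*x^2 + 59*x^2*y + 20*x^2*y^2"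
    unfolding N T by (simp add: algebra_simps power2_eq_square)
  have "0 \<le> 10686*y + 3690*y^2 + 976*x + 1610*x*y + 546*x*y^2 + 38*x^2 + 59*x^2*y + 20*x^2*y^2"
    using x y by (simp add: add_nonneg_nonneg)
  then show ?thesis using e by linarith
qed

lemma plain_total:
  assumes "n \<ge> 3" "T \<ge> 1"
  shows "(\<Sum>t\<in>{..T}. \<Sum>x\<in>colours init_plain (Gg n) (Hg n) t. \<phi> (cnt init_plain (Gg n) t x) (cnt init_plain (Hg n) t x))
   = \<phi> (2*n) (2*n) + (\<phi> 0 1 + \<phi> 0 4 + \<phi> (2*n) (2*n-5)) + (real T - 1) * (\<phi> 0 1 + \<phi> 0 2 + \<phi> 0 2 + (\<phi> (2*n) (2*n-5) :: real))"
proof -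
  have "(\<Sum>t\<in>{..T}. \<Sum>x\<in>colours init_plain (Gg n) (Hg n) t. \<phi> (cnt init_plain (Gg n) t x) (cnt init_plain (Hg n) t x))
    = (\<Sum>t\<in>{..T}. (if t = 0 then \<phi> (2*n) (2*n) else if t = 1 then \<phi> 0 1 + \<phi> 0 4 + \<phi> (2*n) (2*n-5)
      else \<phi> 0 1 + \<phi> 0 2 + \<phi> 0 2 + (\<phi> (2*n) (2*n-5) :: real)))"
    by (rule sum.cong[OF refl], rule plain_round[OF assms(1)])
  also have "\<dots> = \<phi> (2*n) (2*n) + (\<phi> 0 1 + \<phi> 0 4 + \<phi> (2*n) (2*n-5)) + (real T - 1) * (\<phi> 0 1 + \<phi> 0 2 + \<phi> 0 2 + (\<phi> (2*n) (2*n-5) :: real))"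
    by (rule sum_rounds_if[OF assms(2)])
  finally show ?thesis by simp
qed

lemma F_total:
  assumes "n \<ge> 3" "T \<ge> 1"
  shows "(\<Sum>t\<in>{..T}. \<Sum>x\<in>colours (init_F [Fg]) (Gg n) (Hg n) t. \<phi> (cnt (init_F [Fg]) (Gg n) t x) (cnt (init_F [Fg]) (Hg n) t x))
   = (\<phi> 0 3 + \<phi> (2*n) (2*n-3)) + real T * (\<phi> 0 1 + \<phi> 0 2 + \<phi> 0 2 + (\<phi> (2*n) (2*n-5) :: real))"
proof -
  have "(\<Sum>t\<in>{..T}. \<Sum>x\<in>colours (init_F [Fg]) (Gg n) (Hg n) t. \<phi> (cnt (init_F [Fg]) (Gg n) t x) (cnt (init_F [Fg]) (Hg n) t x))
    = (\<Sum>t\<in>{..T}. (if t = 0 then \<phi> 0 3 + \<phi> (2*n) (2*n-3)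
      else \<phi> 0 1 + \<phi> 0 2 + \<phi> 0 2 + (\<phi> (2*n) (2*n-5) :: real)))"
    by (rule sum.cong[OF refl], rule F_round[OF assms(1)])
  also have "\<dots> = (\<phi> 0 3 + \<phi> (2*n) (2*n-3)) + (\<phi> 0 1 + \<phi> 0 2 + \<phi> 0 2 + (\<phi> (2*n) (2*n-5) :: real)) + (real T - 1) * (\<phi> 0 1 + \<phi> 0 2 + \<phi> 0 2 + (\<phi> (2*n) (2*n-5) :: real))"
    using sum_rounds_if1[OF assms(2)] by (simp add: algebra_simps)
  finally show ?thesis by (simp add: algebra_simps)
qed

theorem proposition14:
  fixes n :: nat
  assumes "n \<ge> 10"
  shows "\<exists>G H F. simple_graph G \<and> simple_graph H \<and> simple_graph F
            \<and> card (verts G) = 2 * n \<and> card (verts H) = 2 * n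
            \<and> (\<forall>T::nat. T > 0 \<longrightarrow>
                 wl_dist (init_F [F]) G H T < wl_dist init_plain G H T)"
proof -
  have n3: "n \<ge> 3" using assms by simp
  have main: "wl_dist (init_F [Fg]) (Gg n) (Hg n) T < wl_dist init_plain (Gg n) (Hg n) T" if "T > 0" for T
  proof -
    have T1: "T \<ge> 1" using that by simp
    define N where "N = 2 * real n"
    have N20: "N \<ge> 20" using assms by (simp add: N_def)
    have r: "real (2*n - 5) = N - 5" "real (2*n-3) = N - 3" "real (2*n) = N"
      using n3 by (simp_all add: N_def of_nat_diff)
    define SGP where "SGP = (\<Sum>t\<in>{..T}. \<Sum>c\<in>colours init_plain (Gg n) (Hg n) t. (real (cnt init_plain (Gg n) t c))\<^sup>2)"
    define SHP where "SHP = (\<Sum>t\<in>{..T}. \<Sum>c\<in>colours init_plain (Gg n) (Hg n) t. (real (cnt init_plain (Hg n) t c))\<^sup>2)"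
    define IPP where "IPP = (\<Sum>t\<in>{..T}. \<Sum>c\<in>colours init_plain (Gg n) (Hg n) t. real (cnt init_plain (Gg n) t c) * real (cnt init_plain (Hg n) t c))"
    define SGF where "SGF = (\<Sum>t\<in>{..T}. \<Sum>c\<in>colours (init_F [Fg]) (Gg n) (Hg n) t. (real (cnt (init_F [Fg]) (Gg n) t c))\<^sup>2)"
    define SHF where "SHF = (\<Sum>t\<in>{..T}. \<Sum>c\<in>colours (init_F [Fg]) (Gg n) (Hg n) t. (real (cnt (init_F [Fg]) (Hg n) t c))\<^sup>2)"
    define IPF where "IPF = (\<Sum>t\<in>{..T}. \<Sum>c\<in>colours (init_F [Fg]) (Gg n) (Hg n) t. real (cnt (init_F [Fg]) (Gg n) t c) * real (cnt (init_F [Fg]) (Hg n) t c))"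
    have dP: "wl_dist init_plain (Gg n) (Hg n) T = sqrt (SGP / (sqrt SGP)\<^sup>2 + SHP / (sqrt SHP)\<^sup>2 - 2 * IPP / (sqrt SGP * sqrt SHP))"
      unfolding wl_dist_def phi_norm_def dist_alg SGP_def SHP_def IPP_def ..
    have dF: "wl_dist (init_F [Fg]) (Gg n) (Hg n) T = sqrt (SGF / (sqrt SGF)\<^sup>2 + SHF / (sqrt SHF)\<^sup>2 - 2 * IPF / (sqrt SGF * sqrt SHF))"
      unfolding wl_dist_def phi_norm_def dist_alg SGF_def SHF_def IPF_def ..
    have vSGP: "SGP = (real T + 1) * N^2"
      unfolding SGP_def plain_total[OF n3 T1, of "\<lambda>x y. (real x)\<^sup>2"] using r
      by (simp add: algebra_simps)
    have vSGF: "SGF = (real T + 1) * N^2"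
      unfolding SGF_def F_total[OF n3 T1, of "\<lambda>x y. (real x)\<^sup>2"] using r
      by (simp add: algebra_simps)
    have vSHP: "SHP = N^2 + real T * (N-5)^2 + 9 * real T + 8"
      unfolding SHP_def plain_total[OF n3 T1, of "\<lambda>x y. (real y)\<^sup>2"] using r
      by (simp add: algebra_simps power2_eq_square)
    have vSHF: "SHF = (N-3)^2 + 9 + real T * ((N-5)^2 + 9)"
      unfolding SHF_def F_total[OF n3 T1, of "\<lambda>x y. (real y)\<^sup>2"] using r
      by (simp add: algebra_simps power2_eq_square)
    have vIPP: "IPP = N * (N + real T * (N - 5))"
      unfolding IPP_def plain_total[OF n3 T1, of "\<lambda>x y. real x * real y"] using r
      by (simp add: algebra_simps)
    have vIPF: "IPF = N * (N - 3 + real T * (N - 5))"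
      unfolding IPF_def F_total[OF n3 T1, of "\<lambda>x y. real x * real y"] using r
      by (simp add: algebra_simps)
    have ineq: "IPP^2 * SHF < IPF^2 * SHP"
    proof -
      have "(N + real T*(N-5))^2 * ((N-3)^2 + 9 + real T*((N-5)^2 + 9))
       < (N - 3 + real T*(N-5))^2 * (N^2 + real T*(N-5)^2 + 9*real T + 8)"
        by (rule poly_ineq) (use N20 T1 in auto)
      then have "N^2 * ((N + real T*(N-5))^2 * ((N-3)^2 + 9 + real T*((N-5)^2 + 9)))
       < N^2 * ((N - 3 + real T*(N-5))^2 * (N^2 + real T*(N-5)^2 + 9*real T + 8))"
        using N20 by simp
      moreover have "IPP^2 * SHF = N^2 * ((N + real T*(N-5))^2 * ((N-3)^2 + 9 + real T*((N-5)^2 + 9)))"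
        unfolding vIPP vSHF by (simp only: power_mult_distrib mult.assoc)
      moreover have "IPF^2 * SHP = N^2 * ((N - 3 + real T*(N-5))^2 * (N^2 + real T*(N-5)^2 + 9*real T + 8))"
        unfolding vIPF vSHP by (simp only: power_mult_distrib mult.assoc)
      ultimately show ?thesis by simp
    qed
    have pos: "SGP > 0" "SHP > 0" "SHF > 0" "IPP \<ge> 0" "IPF \<ge> 0"
      unfolding vSGP vSHP vSHF vIPP vIPF using N20 T1 by (simp_all add: add_pos_nonneg)
    show ?thesis unfolding dP dF vSGF[folded vSGP]
      by (rule cmp) (use pos ineq in auto)
  qed
  show ?thesis
  proof (rule exI[of _ "Gg n"], rule exI[of _ "Hg n"], rule exI[of _ Fg])
    have "card (verts (Gg n)) = 2 * n" "card (verts (Hg n)) = 2 * n" by (simp_all add: Gg_def Hg_def verts_def)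
    then show "simple_graph (Gg n) \<and> simple_graph (Hg n) \<and> simple_graph Fg
      \<and> card (verts (Gg n)) = 2 * n \<and> card (verts (Hg n)) = 2 * n
      \<and> (\<forall>T::nat. T > 0 \<longrightarrow> wl_dist (init_F [Fg]) (Gg n) (Hg n) T < wl_dist init_plain (Gg n) (Hg n) T)"
      using sg_G sg_H[OF n3] sg_F main by blast
  qed
qed


end
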